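(* Let $\gamma\in\Gamma$, $n'\in\mathbb{N}_+$ and $v_1,v_2\in V$. If $v_1\preceq v_2$ and $\|v_1\|_1<\|v_2\|_1$, then $\|\varphi^{(\gamma)}_{n'}(v_1)\|_1<\|\varphi^{(\gamma)}_{n'}(v_2)\|_1$.
   Context: $\sigma(x)=\max(0,x)$; $\mathrm{RL}(n,n')$ ($n,n'\in\mathbb{N}_+$) is the set of maps $h:\mathbb{R}^n\to\mathbb{R}^{n'}$, $h(x)_i=\sigma(\langle x,w_i\rangle+b_i)$ for some $W\in\mathbb{R}^{n'\times n}$ with rows $w_i$, $b\in\mathbb{R}^{n'}$; convention: $\mathrm{RL}(0,n')$ are constant maps $\{0\}\to\mathbb{R}^{n'}$ with $\mathcal{H}_{n'}(\mathcal{S}_h)={\rm e}_0$. $S_h(x)_i=1$ iff $\langle x,w_i\rangle+b_i>0$ else $0$; $\mathcal{S}_h=\{S_h(x)\}$; $|s|=\sum_is_i$. $V$: sequences $(v_j)_{j\in\mathbb{N}}$ of nonnegative integers with finite sum, $\|v\|_1=\sum_jv_j$; ${\rm e}_i$ has $({\rm e}_i)_j=\delta_{ij}$; $v\preceq w$ iff $\sum_{j\ge J}v_j\le\sum_{j\ge J}w_j$ for all $J\in\mathbb{N}$; for finite families, $\max_i(v^{(i)})_J=\max_i\sum_{j\ge J}v^{(i)}_j-\max_i\sum_{j\ge J+1}v^{(i)}_j$. $\mathcal{H}_{n'}(\mathcal{S})=(|\{s\in\mathcal{S}:|s|=j\}|)_j$. $\Gamma$: families $(\gamma_{n,n'})_{n'\in\mathbb{N}_+,n\in\{0,\dots,n'\}}$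 in $V$ with (i) $\max\{\mathcal{H}_{n'}(\mathcal{S}_h):h\in\mathrm{RL}(n,n')\}\preceq\gamma_{n,n'}$, (ii) $n\le\tilde n\le n'\Rightarrow\gamma_{n,n'}\preceq\gamma_{\tilde n,n'}$. $\mathrm{cl}_{i^*}(v)_i=v_i$ ($i<i^*$), $\sum_{j\ge i^*}v_j$ ($i=i^*$), $0$ ($i>i^*$). $\varphi^{(\gamma)}_{n'}(v)=\sum_{n=0}^\infty v_n\,\mathrm{cl}_{\min(n,n')}(\gamma_{\min(n,n'),n'})$. *)

theory Defs
  imports Complex_Main
begin

definition inV :: "(nat \<Rightarrow> nat) \<Rightarrow> bool" where
  "inV v \<longleftrightarrow> finite {j. v j \<noteq> 0}"

definition norm1 :: "(nat \<Rightarrow> nat) \<Rightarrow> nat" where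
  "norm1 v = (\<Sum>j\<in>{j. v j \<noteq> 0}. v j)"

definition tailsum :: "(nat \<Rightarrow> nat) \<Rightarrow> nat \<Rightarrow> nat" where
  "tailsum v J = (\<Sum>j\<in>{j. J \<le> j \<and> v j \<noteq> 0}. v j)"

definition unitvec :: "nat \<Rightarrow> nat \<Rightarrow> nat" where
  "unitvec i = (\<lambda>j. if j = i then 1 else 0)"

definition preceq :: "(nat \<Rightarrow> nat) \<Rightarrow> (nat \<Rightarrow> nat) \<Rightarrow> bool" where
  "preceq v w \<longleftrightarrow> (\<forall>J. tailsum v J \<le> tailsum w J)"

text \<open>Maximum of a finite nonempty family F of sequences.\<close>
definition maxfam :: "(nat \<Rightarrow> nat) set \<Rightarrow> nat \<Rightarrow> nat" where
  "maxfam F J = Max ((\<lambda>v. tailsum v J) ` F) - Max ((\<lambda>v. tailsum v (Suc J)) ` F)"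

text \<open>Activation patterns of the ReLU layer x |-> sigma(Wx+b) from R^n to R^n',
  patterns represented as the set of active indices {i < n'. ...}; x ranges over
  functions nat => real of which only the first n coordinates matter.\<close>
definition act_patterns :: "nat \<Rightarrow> nat \<Rightarrow> (nat \<Rightarrow> nat \<Rightarrow> real) \<Rightarrow> (nat \<Rightarrow> real) \<Rightarrow> nat set set" where
  "act_patterns n n' W b =
     {{i. i < n' \<and> (\<Sum>k<n. W i k * x k) + b i > 0} | x :: nat \<Rightarrow> real. True}"

definition hist :: "nat set set \<Rightarrow> nat \<Rightarrow> nat" where
  "hist S = (\<lambda>j. card {s \<in> S. card s = j})"

definition layer_hist :: "nat \<Rightarrow> nat \<Rightarrow> (nat \<Rightarrow> nat \<Rightarrow> real) \<Rightarrow> (nat \<Rightarrow> real) \<Rightarrow> nat \<Rightarrow> nat" where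
  "layer_hist n n' W b = (if n = 0 then unitvec 0 else hist (act_patterns n n' W b))"

definition max_hist :: "nat \<Rightarrow> nat \<Rightarrow> nat \<Rightarrow> nat" where
  "max_hist n n' = maxfam {layer_hist n n' W b | W b. True}"

definition inGamma :: "(nat \<Rightarrow> nat \<Rightarrow> nat \<Rightarrow> nat) \<Rightarrow> bool" where
  "inGamma \<gamma> \<longleftrightarrow>
     (\<forall>n' n. 1 \<le> n' \<and> n \<le> n' \<longrightarrow> inV (\<gamma> n n') \<and> preceq (max_hist n n') (\<gamma> n n')) \<and>
     (\<forall>n' n m. 1 \<le> n' \<and> n \<le> m \<and> m \<le> n' \<longrightarrow> preceq (\<gamma> n n') (\<gamma> m n'))"

definition cl :: "nat \<Rightarrow> (nat \<Rightarrow> nat) \<Rightarrow> nat \<Rightarrow> nat" where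
  "cl istar v = (\<lambda>i. if i < istar then v i else if i = istar then tailsum v istar else 0)"

definition phi :: "(nat \<Rightarrow> nat \<Rightarrow> nat \<Rightarrow> nat) \<Rightarrow> nat \<Rightarrow> (nat \<Rightarrow> nat) \<Rightarrow> nat \<Rightarrow> nat" where
  "phi \<gamma> n' v = (\<lambda>i. \<Sum>n\<in>{n. v n \<noteq> 0}. v n * cl (min n n') (\<gamma> (min n n') n') i)"

end

theory Submission
  imports Defs
begin

lemma tele:
  fixes g :: "nat \<Rightarrow> nat" assumes "mono g"
  shows "(\<Sum>J<Suc N. (if J=0 then g 0 else g J - g (J-1))) = g N"
proof (induction N)
  case 0 then show ?case by simp
next
  case (Suc N)
  have "g N \<le> g (Suc N)" using assms by (simp add: monoD)
  then show ?case using Suc by simp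
qed

lemma abel:
  fixes g :: "nat \<Rightarrow> nat" assumes "mono g"
  shows "(\<Sum>n<N. v n * g n) = (\<Sum>J<N. (if J=0 then g 0 else g J - g (J-1)) * (\<Sum>n\<in>{J..<N}. v n))"
proof (induction N)
  case 0 then show ?case by simp
next
  case (Suc N)
  let ?d = "\<lambda>J. (if J=0 then g 0 else g J - g (J-1))"
  have "(\<Sum>J<Suc N. ?d J * (\<Sum>n\<in>{J..<Suc N}. v n))
      = (\<Sum>J<N. ?d J * (\<Sum>n\<in>{J..<Suc N}. v n)) + ?d N * v N" by simp
  also have "(\<Sum>J<N. ?d J * (\<Sum>n\<in>{J..<Suc N}. v n)) = (\<Sum>J<N. ?d J * (\<Sum>n\<in>{J..<N}. v n) + ?d J * v N)"
    by (rule sum.cong) (auto simp: algebra_simps)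
  also have "\<dots> = (\<Sum>J<N. ?d J * (\<Sum>n\<in>{J..<N}. v n)) + (\<Sum>J<N. ?d J) * v N"
    by (simp add: sum.distrib sum_distrib_right)
  finally have calc: "(\<Sum>J<Suc N. ?d J * (\<Sum>n\<in>{J..<Suc N}. v n))
      = (\<Sum>J<N. ?d J * (\<Sum>n\<in>{J..<N}. v n)) + (\<Sum>J<Suc N. ?d J) * v N"
    by (simp add: algebra_simps)
  show ?case unfolding calc tele[OF assms] using Suc.IH by (simp add: mult.commute)
qed

lemma ineq:
  fixes g :: "nat \<Rightarrow> nat" assumes "mono g" "g 0 \<ge> 1"
    and le: "\<And>J. (\<Sum>n\<in>{J..<N}. v1 n) \<le> (\<Sum>n\<in>{J..<N}. v2 n)"
    and lt: "(\<Sum>n\<in>{0..<N}. v1 n) < (\<Sum>n\<in>{0..<N}. v2 n)"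
    and N: "N \<ge> 1"
  shows "(\<Sum>n<N. v1 n * g n) < (\<Sum>n<N. v2 n * g n)"
proof -
  obtain M where M: "N = Suc M" using N by (cases N) auto
  let ?d = "\<lambda>J. (if J=0 then g 0 else g J - g (J-1))"
  have a: "\<And>v. (\<Sum>n<N. v n * g n) = ?d 0 * (\<Sum>n\<in>{0..<N}. v n) + (\<Sum>J<M. ?d (Suc J) * (\<Sum>n\<in>{Suc J..<N}. v n))"
    unfolding abel[OF assms(1)] M sum.lessThan_Suc_shift by simp
  have s: "?d 0 * (\<Sum>n\<in>{0..<N}. v1 n) < ?d 0 * (\<Sum>n\<in>{0..<N}. v2 n)"
    using lt assms(2) by simp
  have r: "(\<Sum>J<M. ?d (Suc J) * (\<Sum>n\<in>{Suc J..<N}. v1 n)) \<le> (\<Sum>J<M. ?d (Suc J) * (\<Sum>n\<in>{Suc J..<N}. v2 n))"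
    by (rule sum_mono) (rule mult_le_mono2, rule le)
  show ?thesis unfolding a using s r by linarith
qed

lemma supp_lt: fixes N :: nat assumes "\<And>i. i \<ge> N \<Longrightarrow> u i = 0" "u j \<noteq> 0" shows "j < N"
proof (rule ccontr)
  assume "\<not> j < N" then have "N \<le> j" by simp
  with assms show False by simp
qed

lemma tailsum_bound:
  assumes "\<And>i. i \<ge> N \<Longrightarrow> u i = 0"
  shows "tailsum u J = (\<Sum>i\<in>{J..<N}. u i)"
  unfolding tailsum_def
proof (rule sum.mono_neutral_cong_left)
  show "finite {J..<N}" by simp
  show "{j. J \<le> j \<and> u j \<noteq> 0} \<subseteq> {J..<N}"
  proof
    fix j assume "j \<in> {j. J \<le> j \<and> u j \<noteq> 0}"
    then show "j \<in> {J..<N}" using supp_lt[of N u j, OF assms] by auto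
  qed
qed auto

lemma norm1_tailsum: "norm1 u = tailsum u 0"
  unfolding norm1_def tailsum_def by simp

lemma inV_bound:
  assumes "inV u" obtains N where "\<And>i. i \<ge> N \<Longrightarrow> u i = 0"
proof -
  have "finite {j. u j \<noteq> 0}" using assms by (simp add: inV_def)
  then obtain N where "\<forall>j\<in>{j. u j \<noteq> 0}. j < N" using finite_nat_set_iff_bounded by blast
  then show ?thesis
  proof (intro that)
    fix i assume N: "\<forall>j\<in>{j. u j \<noteq> 0}. j < N" and i: "N \<le> i"
    show "u i = 0"
    proof (rule ccontr)
      assume "u i \<noteq> 0" then have "i < N" using N by blast
      then show False using i by simp
    qed
  qed
qed

lemma norm1_bound:
  assumes "\<And>i. i > K \<Longrightarrow> w i = 0"
  shows "norm1 w = (\<Sum>i\<le>K. w i)"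
  unfolding norm1_def
proof (rule sum.mono_neutral_cong_left)
  show "finite {..K}" by simp
  show "{j. w j \<noteq> 0} \<subseteq> {..K}"
  proof
    fix j assume j: "j \<in> {j. w j \<noteq> 0}"
    show "j \<in> {..K}"
    proof (rule ccontr)
      assume "j \<notin> {..K}" then have "j > K" by simp
      then show False using assms j by simp
    qed
  qed
qed auto

lemma cl_sum:
  assumes "inV u" "m \<le> K"
  shows "(\<Sum>i\<le>K. cl m u i) = norm1 u"
proof -
  obtain N0 where N0: "\<And>i. i \<ge> N0 \<Longrightarrow> u i = 0" using inV_bound[OF assms(1)] by blast
  define N where "N = max N0 m"
  have N: "\<And>i. i \<ge> N \<Longrightarrow> u i = 0" using N0 unfolding N_def by auto
  have "(\<Sum>i\<le>K. cl m u i) = (\<Sum>i\<le>m. cl m u i)"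
    by (rule sum.mono_neutral_right) (auto simp: cl_def assms)
  also have "\<dots> = (\<Sum>i<m. u i) + tailsum u m"
    by (simp add: lessThan_Suc_atMost[symmetric] cl_def)
  also have "\<dots> = (\<Sum>i<m. u i) + (\<Sum>i\<in>{m..<N}. u i)" using tailsum_bound[OF N] by simp
  also have "\<dots> = (\<Sum>i\<in>{0..<N}. u i)"
    using sum.atLeastLessThan_concat[of 0 m N u] N_def by (simp add: atLeast0LessThan)
  also have "\<dots> = norm1 u" by (simp only: norm1_tailsum tailsum_bound[OF N])
  finally show ?thesis .
qed

lemma phi_norm:
  assumes g: "\<And>m. m \<le> n' \<Longrightarrow> inV (\<gamma> m n')" and v: "inV v"
  shows "norm1 (phi \<gamma> n' v) = (\<Sum>n\<in>{n. v n \<noteq> 0}. v n * norm1 (\<gamma> (min n n') n'))"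
proof -
  have z: "phi \<gamma> n' v i = 0" if "i > n'" for i
    unfolding phi_def using that by (auto simp: cl_def intro!: sum.neutral)
  have "norm1 (phi \<gamma> n' v) = (\<Sum>i\<le>n'. phi \<gamma> n' v i)" using norm1_bound z by blast
  also have "\<dots> = (\<Sum>n\<in>{n. v n \<noteq> 0}. v n * (\<Sum>i\<le>n'. cl (min n n') (\<gamma> (min n n') n') i))"
    unfolding phi_def by (simp add: sum.swap[of _ "{..n'}"] sum_distrib_left)
  also have "\<dots> = (\<Sum>n\<in>{n. v n \<noteq> 0}. v n * norm1 (\<gamma> (min n n') n'))"
    by (rule sum.cong) (auto simp: cl_sum g)
  finally show ?thesis .
qed

lemma maxhist0: "max_hist 0 n' = unitvec 0"
proof -
  have "{layer_hist 0 n' W b | W b. True} = {unitvec 0}" by (auto simp: layer_hist_def)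
  moreover have "tailsum (unitvec 0) J = (if J = 0 then 1 else 0)" for J
    by (subst tailsum_bound[of 1]) (auto simp: unitvec_def)
  ultimately show ?thesis unfolding max_hist_def maxfam_def by (auto simp: unitvec_def)
qed

theorem mainTheorem6:
  fixes \<gamma> :: "nat \<Rightarrow> nat \<Rightarrow> nat \<Rightarrow> nat" and n' :: nat and v1 v2 :: "nat \<Rightarrow> nat"
  assumes "inGamma \<gamma>" and "1 \<le> n'" and "inV v1" and "inV v2"
    and "preceq v1 v2" and "norm1 v1 < norm1 v2"
  shows "norm1 (phi \<gamma> n' v1) < norm1 (phi \<gamma> n' v2)"
proof -
  define g where "g n = norm1 (\<gamma> (min n n') n')" for n
  have gV: "\<And>m. m \<le> n' \<Longrightarrow> inV (\<gamma> m n')" using assms(1,2) by (simp add: inGamma_def)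
  have mono: "mono g"
  proof (rule monoI)
    fix a b :: nat assume "a \<le> b"
    then have "preceq (\<gamma> (min a n') n') (\<gamma> (min b n') n')"
      using assms(1,2) unfolding inGamma_def by auto
    then show "g a \<le> g b" unfolding g_def preceq_def norm1_tailsum by blast
  qed
  have g0: "g 0 \<ge> 1"
  proof -
    have "preceq (max_hist 0 n') (\<gamma> 0 n')" using assms(1,2) unfolding inGamma_def by auto
    then have "tailsum (unitvec 0) 0 \<le> tailsum (\<gamma> 0 n') 0" unfolding maxhist0 preceq_def by blast
    moreover have "tailsum (unitvec 0) 0 = 1"
      by (subst tailsum_bound[of 1]) (auto simp: unitvec_def)
    ultimately show ?thesis unfolding g_def norm1_tailsum by simp
  qed
  obtain N1 where N1: "\<And>i. i \<ge> N1 \<Longrightarrow> v1 i = 0" using inV_bound[OF assms(3)] by blast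
  obtain N2 where N2: "\<And>i. i \<ge> N2 \<Longrightarrow> v2 i = 0" using inV_bound[OF assms(4)] by blast
  define N where "N = max 1 (max N1 N2)"
  have B1: "\<And>i. i \<ge> N \<Longrightarrow> v1 i = 0" using N1 N_def by auto
  have B2: "\<And>i. i \<ge> N \<Longrightarrow> v2 i = 0" using N2 N_def by auto
  have red: "(\<Sum>n\<in>{n. v n \<noteq> 0}. v n * g n) = (\<Sum>n<N. v n * g n)"
    if "\<And>i. i \<ge> N \<Longrightarrow> v i = 0" for v
  proof (rule sum.mono_neutral_cong_left)
    show "finite {..<N}" by simp
    show "{n. v n \<noteq> 0} \<subseteq> {..<N}" using supp_lt[of N v, OF that] by blast
  qed auto
  have "(\<Sum>n<N. v1 n * g n) < (\<Sum>n<N. v2 n * g n)"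
  proof (rule ineq[OF mono g0])
    show "(\<Sum>n\<in>{J..<N}. v1 n) \<le> (\<Sum>n\<in>{J..<N}. v2 n)" for J
    proof -
      have "tailsum v1 J \<le> tailsum v2 J" using assms(5) unfolding preceq_def by blast
      then show ?thesis by (simp only: tailsum_bound[OF B1] tailsum_bound[OF B2])
    qed
    show "(\<Sum>n\<in>{0..<N}. v1 n) < (\<Sum>n\<in>{0..<N}. v2 n)"
      using assms(6) by (simp only: norm1_tailsum tailsum_bound[OF B1] tailsum_bound[OF B2])
    show "N \<ge> 1" using N_def by simp
  qed
  then have "(\<Sum>n\<in>{n. v1 n \<noteq> 0}. v1 n * g n) < (\<Sum>n\<in>{n. v2 n \<noteq> 0}. v2 n * g n)"
    using red[OF B1] red[OF B2] by simp
  moreover have "norm1 (phi \<gamma> n' v) = (\<Sum>n\<in>{n. v n \<noteq> 0}. v n * g n)" if "inV v" for v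
    using phi_norm[of n' \<gamma> v, OF gV that] unfolding g_def .
  ultimately show ?thesis using assms(3,4) by simp
qed

end
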